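(* Let $K$ be a differential field of characteristic $0$ and let $M$ be a differential module over $K$ of dimension $3$ with $\det M=\mathbf{1}$. Suppose that there exists $F\in \mathrm{sym}^2M$ with $\partial F=0$ such that $F$ is non degenerate and has a non trivial isotropic vector. Then there exists a differential module $N$ over $K$ of dimension $2$ with $\det N=\mathbf{1}$ and $\mathrm{sym}^2N\cong M$.
   Context: A differential module over $K$ is a finite-dimensional $K$-vector space with an additive map $\partial$ satisfying $\partial(fm)=f'm+f\partial m$; $\mathrm{sym}^2M$, $\Lambda^kM$ carry the induced derivations, $\det M=\Lambda^{\dim M}M$, and $\mathbf{1}$ is the trivial module $K$ with $\partial=$ the derivation of $K$. An element $F\in\mathrm{sym}^2M$ defines a symmetric bilinear form $(a,b)=F(a\otimes b)$ on the dual $M^*$; $F$ is non degenerate if this form is, and an isotropic vector is a nonzero $a\in M^*$ with $(a,a)=0$. *)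

theory Defs
  imports "HOL-Analysis.Analysis"
begin

definition derivation :: "('k::field \<Rightarrow> 'k) \<Rightarrow> bool" where
  "derivation D \<longleftrightarrow> (\<forall>a b. D (a + b) = D a + D b) \<and> (\<forall>a b. D (a * b) = D a * b + a * D b)"

text \<open>A differential module of dimension n over (K,D), realised on the standard
K-vector space K^n (every n-dimensional K-vector space is isomorphic to it):
an additive map dM satisfying the Leibniz rule.\<close>
definition diff_module :: "('k::field \<Rightarrow> 'k) \<Rightarrow> ('k^'n \<Rightarrow> 'k^'n) \<Rightarrow> bool" where
  "diff_module D dM \<longleftrightarrow>
     (\<forall>x y. dM (x + y) = dM x + dM y) \<and> (\<forall>f x. dM (f *s x) = D f *s x + f *s dM x)"

text \<open>Tensors in M \<otimes> M are represented by their coefficient matrices T, meaning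
the tensor  \<Sum> T_ij e_i \<otimes> e_j.  sym^2 M is the (char 0) subspace of symmetric tensors.\<close>
definition symm_tensor :: "'k^'n^'n \<Rightarrow> bool" where
  "symm_tensor T \<longleftrightarrow> (\<forall>i j. T $ i $ j = T $ j $ i)"

definition mat_scale :: "'k::times \<Rightarrow> 'k^'n^'n \<Rightarrow> 'k^'n^'n" where
  "mat_scale c T = (\<chi> r s. c * T $ r $ s)"

text \<open>Induced derivation on M \<otimes> M:  \<partial>(u \<otimes> v) = \<partial>u \<otimes> v + u \<otimes> \<partial>v, i.e.
 \<partial>(\<Sum> T_ij e_i\<otimes>e_j) = \<Sum> D(T_ij) e_i\<otimes>e_j + T_ij (\<partial>e_i \<otimes> e_j + e_i \<otimes> \<partial>e_j).\<close>
definition tensor2_deriv :: "('k::field \<Rightarrow> 'k) \<Rightarrow> ('k^'n \<Rightarrow> 'k^'n) \<Rightarrow> 'k^'n^'n \<Rightarrow> 'k^'n^'n" where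
  "tensor2_deriv D dM T = (\<chi> r c. D (T $ r $ c)
      + (\<Sum>i\<in>UNIV. \<Sum>j\<in>UNIV. T $ i $ j *
           ((dM (axis i 1)) $ r * (axis j 1) $ c + (axis i 1) $ r * (dM (axis j 1)) $ c)))"

text \<open>The symmetric bilinear form on M^* defined by F \<in> sym^2 M (coordinates w.r.t.
the dual basis): (a,b) = F(a \<otimes> b).\<close>
definition sym2_form :: "'k::field^'n^'n \<Rightarrow> 'k^'n \<Rightarrow> 'k^'n \<Rightarrow> 'k" where
  "sym2_form F a b = (\<Sum>i\<in>UNIV. \<Sum>j\<in>UNIV. a $ i * F $ i $ j * b $ j)"

definition nondegenerate :: "'k::field^'n^'n \<Rightarrow> bool" where
  "nondegenerate F \<longleftrightarrow> (\<forall>a. a \<noteq> 0 \<longrightarrow> (\<exists>b. sym2_form F a b \<noteq> 0))"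

definition has_isotropic :: "'k::field^'n^'n \<Rightarrow> bool" where
  "has_isotropic F \<longleftrightarrow> (\<exists>a. a \<noteq> 0 \<and> sym2_form F a a = 0)"

text \<open>det M = \<Lambda>^n M is the one-dimensional module K\<cdot>(e_1\<and>\<dots>\<and>e_n); its derivation is
\<partial>(f e_1\<and>\<dots>\<and>e_n) = D f e_1\<and>\<dots>\<and>e_n + f \<Sum>_i e_1\<and>\<dots>\<and>\<partial>e_i\<and>\<dots>\<and>e_n, where a wedge of
n vectors is the determinant of their coordinate columns times e_1\<and>\<dots>\<and>e_n.\<close>
definition top_wedge_deriv :: "('k::field \<Rightarrow> 'k) \<Rightarrow> ('k^'n \<Rightarrow> 'k^'n) \<Rightarrow> 'k \<Rightarrow> 'k" where
  "top_wedge_deriv D dM f = D f + f * (\<Sum>i\<in>UNIV.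
      det (\<chi> r c. if c = i then (dM (axis i 1)) $ r else (axis c 1) $ r))"

text \<open>det M = 1: \<Lambda>^n M is isomorphic to the trivial module, i.e. (being one-dimensional)
it has a nonzero horizontal element.\<close>
definition det_trivial :: "('k::field \<Rightarrow> 'k) \<Rightarrow> ('k^'n \<Rightarrow> 'k^'n) \<Rightarrow> bool" where
  "det_trivial D dM \<longleftrightarrow> (\<exists>f. f \<noteq> 0 \<and> top_wedge_deriv D dM f = 0)"

definition sym2_iso :: "('k::field \<Rightarrow> 'k) \<Rightarrow> ('k^'n \<Rightarrow> 'k^'n) \<Rightarrow> ('k^'m \<Rightarrow> 'k^'m)
    \<Rightarrow> ('k^'n^'n \<Rightarrow> 'k^'m) \<Rightarrow> bool" where
  "sym2_iso D dN dM \<phi> \<longleftrightarrow>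
     (\<forall>S T. symm_tensor S \<longrightarrow> symm_tensor T \<longrightarrow> \<phi> (S + T) = \<phi> S + \<phi> T) \<and>
     (\<forall>c S. symm_tensor S \<longrightarrow> \<phi> (mat_scale c S) = c *s \<phi> S) \<and>
     bij_betw \<phi> {S. symm_tensor S} UNIV \<and>
     (\<forall>S. symm_tensor S \<longrightarrow> \<phi> (tensor2_deriv D dN S) = dM (\<phi> S))"

end

theory Submission
  imports Defs
begin


definition Dv :: "('k::field \<Rightarrow> 'k) \<Rightarrow> 'k^'n \<Rightarrow> 'k^'n" where
  "Dv D x = (\<chi> r. D (x$r))"
definition Dm :: "('k::field \<Rightarrow> 'k) \<Rightarrow> 'k^'n^'m \<Rightarrow> 'k^'n^'m" where
  "Dm D X = (\<chi> i j. D (X$i$j))"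
definition conn :: "('k::field^'n \<Rightarrow> 'k^'n) \<Rightarrow> 'k^'n^'n" where
  "conn dM = (\<chi> r i. dM (axis i 1) $ r)"

context fixes D :: "'k::field \<Rightarrow> 'k" assumes der: "derivation D"
begin

lemma d_add[simp]: "D (a + b) = D a + D b" using der by (simp add: derivation_def)
lemma d_mult[simp]: "D (a * b) = D a * b + a * D b" using der by (simp add: derivation_def)
lemma d0[simp]: "D 0 = 0"
proof - have "D (0+0) = D 0 + D 0" by (rule d_add) thus ?thesis by (metis add_cancel_right_right add_0) qed
lemma d1[simp]: "D 1 = 0"
proof - have "D (1*1) = D 1 * 1 + 1 * D 1" by (rule d_mult) thus ?thesis by (metis add_cancel_right_right mult_1 mult_1_right) qed
lemma d_minus[simp]: "D (- a) = - D a"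
proof - have "D (a + - a) = D a + D (- a)" by (rule d_add) thus ?thesis by (metis d0 add.right_inverse add_eq_0_iff) qed
lemma d_diff[simp]: "D (a - b) = D a - D b"
  by (metis d_add d_minus diff_conv_add_uminus)
lemma d_sum[simp]: "D (sum f S) = sum (\<lambda>x. D (f x)) S"
  by (induction S rule: infinite_finite_induct) auto
lemma d_of_nat[simp]: "D (of_nat n) = 0"
  by (induction n) auto
lemma d_numeral[simp]: "D (numeral n) = 0"
  by (metis d_of_nat of_nat_numeral)
lemma d_inv: "b \<noteq> 0 \<Longrightarrow> D (inverse b) = - D b / b^2"
proof -
  assume b: "b \<noteq> 0"
  have "D (b * inverse b) = 0" using b by simp
  hence "D b * inverse b + b * D (inverse b) = 0" by simp
  hence "b * D (inverse b) = - (D b * inverse b)" by (metis add_eq_0_iff)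
  hence "D (inverse b) = - (D b * inverse b) / b" using b by (simp add: field_simps)
  thus ?thesis using b by (simp add: field_simps power2_eq_square)
qed
lemma d_divide: assumes b: "b \<noteq> 0" shows "D (a / b) = (D a * b - a * D b) / b^2"
proof -
  have "D (a / b) = D a * inverse b + a * (- D b / b^2)"
    by (simp only: divide_inverse[of a b] d_mult d_inv[OF b])
  also have "\<dots> = (D a * b - a * D b) / b^2" using b by (simp add: field_simps power2_eq_square)
  finally show ?thesis .
qed

lemma Dv_mat: "Dv D (P *v y) = Dm D P *v y + P *v Dv D y"
  by (simp add: vec_eq_iff Dv_def Dm_def matrix_vector_mult_def sum.distrib)

lemma Dm_mult: "Dm D (X ** Y) = Dm D X ** Y + X ** Dm D Y"
  by (simp add: vec_eq_iff Dm_def matrix_matrix_mult_def sum.distrib)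

lemma dm_decomp:
  assumes "diff_module D dM" shows "dM x = Dv D x + conn dM *v x"
proof -
  have add: "\<And>x y. dM (x + y) = dM x + dM y" and lb: "\<And>f x. dM (f *s x) = D f *s x + f *s dM x"
    using assms by (auto simp: diff_module_def)
  have z: "dM 0 = 0" using add[of 0 0] by simp
  have s: "dM (sum g S) = sum (\<lambda>i. dM (g i)) S" for g :: "'n \<Rightarrow> _" and S
    by (induction S rule: infinite_finite_induct) (auto simp: z add)
  have "dM x = dM (\<Sum>i\<in>UNIV. x$i *s axis i 1)" by (simp add: basis_expansion)
  also have "\<dots> = (\<Sum>i\<in>UNIV. D (x$i) *s axis i 1) + (\<Sum>i\<in>UNIV. x$i *s dM (axis i 1))"
    by (simp add: s lb sum.distrib)
  also have "(\<Sum>i\<in>UNIV. D (x$i) *s axis i 1) = Dv D x"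
    using basis_expansion[of "Dv D x"] by (simp add: Dv_def)
  also have "(\<Sum>i\<in>UNIV. x$i *s dM (axis i 1)) = conn dM *v x"
    by (simp add: vec_eq_iff conn_def matrix_vector_mult_def sum_component mult.commute)
  finally show ?thesis .
qed

end

lemma tensor_aux:
  fixes T :: "'k::field^'n^'n" and X :: "'n \<Rightarrow> 'n \<Rightarrow> 'k"
  shows "(\<Sum>i\<in>UNIV. \<Sum>j\<in>UNIV. T$i$j * (X i r * (if c = j then 1 else 0) + (if r = i then 1 else 0) * X j c))
     = (\<Sum>i\<in>UNIV. X i r * T$i$c) + (\<Sum>j\<in>UNIV. T$r$j * X j c)"
proof -
  have "(\<Sum>i\<in>UNIV. \<Sum>j\<in>UNIV. T$i$j * (X i r * (if c = j then 1 else 0) + (if r = i then 1 else 0) * X j c))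
     = (\<Sum>i\<in>UNIV. \<Sum>j\<in>UNIV. (if c = j then T$i$j * X i r else 0)) + (\<Sum>i\<in>UNIV. \<Sum>j\<in>UNIV. (if r = i then T$i$j * X j c else 0))"
  proof -
    have "\<And>i j. T$i$j * (X i r * (if c = j then 1 else 0) + (if r = i then 1 else 0) * X j c)
       = (if c = j then T$i$j * X i r else 0) + (if r = i then T$i$j * X j c else 0)" by (simp add: distrib_left)
    thus ?thesis by (simp only: sum.distrib)
  qed
  also have "\<dots> = (\<Sum>i\<in>UNIV. X i r * T$i$c) + (\<Sum>j\<in>UNIV. T$r$j * X j c)"
  proof -
    have "\<And>i. (\<Sum>j\<in>UNIV. (if r = i then T$i$j * X j c else 0)) = (if r = i then (\<Sum>j\<in>UNIV. T$i$j * X j c) else 0)"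
      by simp
    thus ?thesis by (simp add: sum.delta mult.commute)
  qed
  finally show ?thesis .
qed

lemma tensor_decomp:
  "tensor2_deriv D dM T = Dm D T + conn dM ** T + T ** transpose (conn dM)"
  unfolding vec_eq_iff
proof (intro allI)
  fix r c
  have ax: "\<And>i k. axis i 1 $ k = (if k = i then 1 else 0)" by (simp add: axis_def)
  show "tensor2_deriv D dM T $ r $ c = (Dm D T + conn dM ** T + T ** transpose (conn dM)) $ r $ c"
    unfolding tensor2_deriv_def vec_lambda_beta ax
    using tensor_aux[of T "\<lambda>i r. dM (axis i 1) $ r" r c]
    by (simp add: Dm_def conn_def matrix_matrix_mult_def transpose_def eq_commute[of r] eq_commute[of c] cong: if_cong)
qed

lemma wedge3: "top_wedge_deriv D (dM::'k::field^3\<Rightarrow>'k^3) f = D f + f * trace (conn dM)"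
  by (simp add: top_wedge_deriv_def sum_3 det_3 trace_def conn_def axis_def)
lemma wedge2: "top_wedge_deriv D (dM::'k::field^2\<Rightarrow>'k^2) f = D f + f * trace (conn dM)"
  by (simp add: top_wedge_deriv_def sum_2 det_2 trace_def conn_def axis_def)



definition dotk :: "'k::field^'n \<Rightarrow> 'k^'n \<Rightarrow> 'k" where
  "dotk x y = (\<Sum>i\<in>UNIV. x$i * y$i)"
definition crossk :: "'k::field^3 \<Rightarrow> 'k^3 \<Rightarrow> 'k^3" where
  "crossk a b = vector [a$2*b$3 - a$3*b$2, a$3*b$1 - a$1*b$3, a$1*b$2 - a$2*b$1]"
definition adj3 :: "'k::field^3^3 \<Rightarrow> 'k^3^3" where
  "adj3 m = vector [
     vector [m$2$2*m$3$3 - m$2$3*m$3$2, m$1$3*m$3$2 - m$1$2*m$3$3, m$1$2*m$2$3 - m$1$3*m$2$2],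
     vector [m$2$3*m$3$1 - m$2$1*m$3$3, m$1$1*m$3$3 - m$1$3*m$3$1, m$1$3*m$2$1 - m$1$1*m$2$3],
     vector [m$2$1*m$3$2 - m$2$2*m$3$1, m$1$2*m$3$1 - m$1$1*m$3$2, m$1$1*m$2$2 - m$1$2*m$2$1]]"

lemma sym2_dot: "sym2_form F x y = dotk x (F *v y)"
  by (simp add: sym2_form_def dotk_def matrix_vector_mult_def sum_distrib_left mult.assoc)

lemma sym2_sym: "symm_tensor F \<Longrightarrow> sym2_form F x y = sym2_form F y x"
  unfolding sym2_form_def symm_tensor_def
  by (subst sum.swap) (simp add: mult_ac)

lemma adj3_right: "(m::'k::field^3^3) ** adj3 m = mat (det m)"
  by (simp add: adj3_def vec_eq_iff forall_3 matrix_matrix_mult_def sum_3 det_3 mat_def; algebra)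

lemma adj3_left: "adj3 (m::'k::field^3^3) ** m = mat (det m)"
  by (simp add: adj3_def vec_eq_iff forall_3 matrix_matrix_mult_def sum_3 det_3 mat_def; algebra)

lemma cross_dot1: "dotk a (crossk a b) = (0::'k::field)"
  by (simp add: dotk_def crossk_def sum_3; algebra)
lemma cross_dot2: "dotk b (crossk a b) = (0::'k::field)"
  by (simp add: dotk_def crossk_def sum_3; algebra)

lemma cross_adj:
  assumes "symm_tensor (F::'k::field^3^3)"
  shows "dotk (crossk a b) (adj3 F *v crossk a b) = sym2_form F a a * sym2_form F b b - (sym2_form F a b)^2"
proof -
  have s: "F$2$1 = F$1$2" "F$3$1 = F$1$3" "F$3$2 = F$2$3" using assms by (auto simp: symm_tensor_def)
  show ?thesis
    by (simp add: dotk_def crossk_def adj3_def sym2_form_def sum_3 matrix_vector_mult_def s power2_eq_square; algebra)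
qed

lemma det_rows: "det (vector [t *s a, w, b] :: 'k::field^3^3) = - t * dotk w (crossk a b)"
  by (simp add: det_3 dotk_def crossk_def sum_3; algebra)

lemma jacobi3:
  assumes "derivation D"
  shows "D (det (P::'k::field^3^3)) = trace (adj3 P ** Dm D P)"
  by (simp add: d_add[OF assms] d_mult[OF assms] d_diff[OF assms] det_3 trace_def adj3_def
      Dm_def matrix_matrix_mult_def sum_3; algebra)



lemma mm_radd: "((X::'k::field^'n^'m) + Y) ** Z = X ** Z + Y ** Z"
  by (simp add: vec_eq_iff matrix_matrix_mult_def sum.distrib distrib_right)
lemma mm_rdiff: "((X::'k::field^'n^'m) - Y) ** Z = X ** Z - Y ** Z"
  by (simp add: vec_eq_iff matrix_matrix_mult_def sum_subtractf left_diff_distrib)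
lemma mm_ldiff: "(X::'k::field^'n^'m) ** (Y - Z) = X ** Y - X ** Z"
  by (simp add: vec_eq_iff matrix_matrix_mult_def sum_subtractf right_diff_distrib)
lemma mm_rneg: "(- (X::'k::field^'n^'m)) ** Z = - (X ** Z)"
  by (simp add: vec_eq_iff matrix_matrix_mult_def sum_negf)
lemma mm_lneg: "(X::'k::field^'n^'m) ** (- Z) = - (X ** Z)"
  by (simp add: vec_eq_iff matrix_matrix_mult_def sum_negf)
lemma tr_add: "transpose ((X::'k::field^'n^'m) + Y) = transpose X + transpose Y"
  by (simp add: vec_eq_iff transpose_def)
lemma tr_diff: "transpose ((X::'k::field^'n^'m) - Y) = transpose X - transpose Y"
  by (simp add: vec_eq_iff transpose_def)
lemma tr_neg: "transpose (- (X::'k::field^'n^'m)) = - transpose X"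
  by (simp add: vec_eq_iff transpose_def)
lemma Dm_tr: "Dm D (transpose X) = transpose (Dm D X)"
  by (simp add: vec_eq_iff transpose_def Dm_def)
lemma Dm_add: "derivation D \<Longrightarrow> Dm D (X + Y) = Dm D X + Dm D Y"
  by (simp add: vec_eq_iff Dm_def)
lemma Dm_mat1: "derivation D \<Longrightarrow> Dm D (mat 1 :: 'k::field^'n^'n) = 0"
  by (simp add: vec_eq_iff Dm_def mat_def)

lemmas mnorm = mm_radd mm_rdiff mm_ldiff mm_rneg mm_lneg matrix_add_ldistrib tr_add tr_diff tr_neg
  matrix_transpose_mul transpose_transpose Dm_tr matrix_mul_assoc

lemma gauge:
  fixes Q P A F :: "'k::field^'n^'n"
  assumes der: "derivation D" and PQ: "P ** Q = mat 1" and QP: "Q ** P = mat 1"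
    and hF: "Dm D F + A ** F + F ** transpose A = 0" and sym: "transpose F = F"
  shows "Dm D (Q ** F ** transpose Q) + ((Q ** A - Dm D Q) ** P) ** (Q ** F ** transpose Q)
      + (Q ** F ** transpose Q) ** transpose ((Q ** A - Dm D Q) ** P) = 0"
proof -
  have c1: "Y ** P ** Q = Y" for Y :: "'k^'n^'n" by (metis PQ matrix_mul_assoc matrix_mul_rid)
  have PQt: "transpose Q ** transpose P = mat 1" by (metis PQ matrix_transpose_mul transpose_mat)
  have c2: "Y ** transpose Q ** transpose P = Y" for Y :: "'k^'n^'n" by (metis PQt matrix_mul_assoc matrix_mul_rid)
  have dF: "Dm D F = - (A ** F) - F ** transpose A" using hF by (simp add: algebra_simps eq_neg_iff_add_eq_0 add.assoc)
  show ?thesis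
    by (simp add: mnorm Dm_mult[OF der] dF sym c1 c2 algebra_simps)
qed



lemma sym2_scale_r: "sym2_form F x (c *s y) = c * sym2_form F x y"
  by (simp add: sym2_form_def sum_distrib_left mult_ac)
lemma sym2_scale_l: "sym2_form F (c *s x) y = c * sym2_form F x y"
  by (simp add: sym2_form_def sum_distrib_left mult_ac)
lemma sym2_diff_r: "sym2_form F x (y - z) = sym2_form F x y - sym2_form F x z"
  by (simp add: sym2_form_def sum_subtractf right_diff_distrib)
lemma sym2_diff_l: "sym2_form F (x - y) z = sym2_form F x z - sym2_form F y z"
  by (simp add: sym2_form_def sum_subtractf left_diff_distrib)
lemma QFQ: "(Q ** F ** transpose Q) $ k $ l = sym2_form F (Q$k) (Q$l)"
  unfolding sym2_form_def matrix_matrix_mult_def transpose_def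
  by (simp add: sum_distrib_right sum_distrib_left mult_ac) (subst sum.swap, simp)
lemma mat_vec: "mat k *v (u::'k::field^'n) = k *s u"
  by (simp add: vec_eq_iff mat_def matrix_vector_mult_def if_distrib if_distribR sum.delta cong: if_cong)
lemma dot_scale: "dotk x (c *s y) = c * dotk x y"
  by (simp add: dotk_def sum_distrib_left mult_ac)
lemma dot_comm: "dotk x y = dotk y x"
  by (simp add: dotk_def mult.commute)

lemma conn_N: "derivation D \<Longrightarrow> conn (\<lambda>x. Dv D x + C *v x) = (C::'k::field^'n^'n)"
proof -
  assume der: "derivation D"
  show ?thesis
    by (simp add: d0[OF der] d1[OF der] vec_eq_iff conn_def Dv_def axis_def matrix_vector_mult_def if_distrib if_distribR sum.delta cong: if_cong)
qed

lemma diff_module_N: "derivation D \<Longrightarrow> diff_module D (\<lambda>x. Dv D x + C *v x)"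
  unfolding diff_module_def
  by (simp add: vec_eq_iff Dv_def matrix_vector_mult_def sum.distrib distrib_left sum_distrib_left mult_ac
      d_add d_mult)



theorem theorem2p1:
  fixes D :: "'k::field_char_0 \<Rightarrow> 'k"
    and dM :: "'k^3 \<Rightarrow> 'k^3"
    and F :: "'k^3^3"
  assumes "derivation D"
    and "diff_module D dM"
    and "det_trivial D dM"
    and "symm_tensor F"
    and "tensor2_deriv D dM F = 0"
    and "nondegenerate F"
    and "has_isotropic F"
  shows "\<exists>(dN :: 'k^2 \<Rightarrow> 'k^2) (\<phi> :: 'k^2^2 \<Rightarrow> 'k^3).
           diff_module D dN \<and> det_trivial D dN \<and> sym2_iso D dN dM \<phi>"
proof -
  note der = assms(1)
  let ?A = "conn dM"
  have dm: "\<And>x. dM x = Dv D x + ?A *v x" using dm_decomp[OF assms(1,2)] .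
  have hF: "Dm D F + ?A ** F + F ** transpose ?A = 0" using assms(5) tensor_decomp by metis
  obtain f where f0: "f \<noteq> 0" and hf: "D f + f * trace ?A = 0"
    using assms(3) wedge3 det_trivial_def by metis
  have symF: "transpose F = F" using assms(4) by (simp add: vec_eq_iff transpose_def symm_tensor_def)
  have ssym: "\<And>x y. sym2_form F x y = sym2_form F y x" using sym2_sym[OF assms(4)] .
  have dF: "det F \<noteq> 0"
  proof
    assume "det F = 0"
    hence "\<not> invertible F" by (simp add: invertible_det_nz)
    hence "\<not> (\<forall>x. F *v x = 0 \<longrightarrow> x = 0)" using invertible_left_inverse matrix_left_invertible_ker by metis
    then obtain x where x: "F *v x = 0" "x \<noteq> 0" by blast
    then obtain y where "sym2_form F x y \<noteq> 0" using assms(6) nondegenerate_def by blast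
    moreover have "sym2_form F x y = 0" using ssym[of x y] sym2_dot[of F y x] x by (simp add: dotk_def)
    ultimately show False by simp
  qed
  obtain a where a0: "a \<noteq> 0" and aa: "sym2_form F a a = 0" using assms(7) has_isotropic_def by blast
  obtain b0 where ab0: "sym2_form F a b0 \<noteq> 0" using assms(6) a0 nondegenerate_def by blast
  define b1 where "b1 = (1 / sym2_form F a b0) *s b0"
  have ab1: "sym2_form F a b1 = 1" using ab0 by (simp add: b1_def sym2_scale_r)
  define bb where "bb = b1 - (sym2_form F b1 b1 / 2) *s a"
  have abb: "sym2_form F a bb = 1" by (simp add: bb_def sym2_diff_r sym2_scale_r ab1 aa)
  have bba: "sym2_form F bb a = 1" using abb ssym by metis
  have bbbb: "sym2_form F bb bb = 0"
  proof -
    have "sym2_form F bb bb = sym2_form F b1 b1 - sym2_form F b1 b1 / 2 * sym2_form F a b1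
        - sym2_form F b1 b1 / 2 * sym2_form F b1 a + (sym2_form F b1 b1 / 2) * (sym2_form F b1 b1 / 2) * sym2_form F a a"
      by (simp add: bb_def sym2_diff_r sym2_diff_l sym2_scale_r sym2_scale_l algebra_simps)
    also have "\<dots> = 0" using ab1 ssym[of b1 a] aa by simp
    finally show ?thesis .
  qed
  define u where "u = crossk a bb"
  define w where "w = adj3 F *v u"
  have Fw: "F *v w = det F *s u" by (simp add: w_def matrix_vector_mul_assoc adj3_right mat_vec)
  have aw: "sym2_form F a w = 0" by (simp add: sym2_dot Fw dot_scale u_def cross_dot1)
  have bw: "sym2_form F bb w = 0" by (simp add: sym2_dot Fw dot_scale u_def cross_dot2)
  have wa: "sym2_form F w a = 0" using aw ssym by metis
  have wbb: "sym2_form F w bb = 0" using bw ssym by metis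
  have uw: "dotk u w = -1"
    using cross_adj[OF assms(4), of a bb] aa bbbb abb by (simp add: w_def u_def)
  have wu: "dotk w u = -1" using uw dot_comm by metis
  define e where "e = - det F"
  have e0: "e \<noteq> 0" using dF by (simp add: e_def)
  have ww: "sym2_form F w w = e" by (simp add: sym2_dot Fw dot_scale wu e_def)
  define t where "t = -2 * e"
  have t0: "t \<noteq> 0" using e0 by (simp add: t_def)
  define Q :: "'k^3^3" where "Q = vector [t *s a, w, bb]"
  have detQ: "det Q = t" by (simp add: Q_def det_rows u_def[symmetric] wu)
  obtain P where QP: "Q ** P = mat 1"
    using invertible_right_inverse invertible_det_nz detQ t0 by metis
  have PQ: "P ** Q = mat 1" using matrix_left_right_inverse QP by metis
  define p where "p = det P"
  have pt: "p * t = 1" using det_mul[of P Q] PQ detQ by (simp add: p_def)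
  have p0: "p \<noteq> 0" using pt by auto
  define G where "G = Q ** F ** transpose Q"
  have G: "G = vector [vector [0,0,t], vector [0,e,0], vector [t,0,0]]"
    by (simp add: vec_eq_iff forall_3 G_def QFQ Q_def sym2_scale_l sym2_scale_r aa aw bw abb bba bbbb ww wa wbb)
  define B where "B = (Q ** ?A - Dm D Q) ** P"
  have gg: "Dm D G + B ** G + G ** transpose B = 0"
    using gauge[OF der PQ QP hF symF] by (simp add: G_def B_def)
  have E: "\<And>i j. (Dm D G + B ** G + G ** transpose B) $ i $ j = 0" using gg by simp
  have Dt: "D t = -2 * D e" by (simp add: t_def d_mult[OF der] d_minus[OF der] d_numeral[OF der])
  note Gs = G Dm_def matrix_matrix_mult_def sum_3 transpose_def d0[OF der]
  have b13: "B$1$3 = 0" using E[of 1 1] t0 by (simp add: Gs)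
  have b31: "B$3$1 = 0" using E[of 3 3] t0 by (simp add: Gs)
  have b22': "D e + e * (2 * B$2$2) = 0" using E[of 2 2] by (simp add: Gs algebra_simps)
  have b22: "2 * e * B$2$2 = - D e" using b22' by (metis add_eq_0_iff add.commute mult.assoc mult.commute)
  have b12: "B$1$2 = 2 * B$2$3" using E[of 1 2] e0 by (simp add: Gs t_def algebra_simps)
  have b32: "B$3$2 = 2 * B$2$1" using E[of 2 3] e0 by (simp add: Gs t_def algebra_simps)
  have b1133h: "e * (2 * B$1$1) + e * (2 * B$3$3) = - (D e * 2)" using E[of 1 3] e0 Dt by (simp add: Gs t_def algebra_simps)
  hence "2 * (e * (B$1$1 + B$3$3)) = 2 * (- D e)" by (simp add: algebra_simps)
  hence b1133: "e * (B$1$1 + B$3$3) = - D e" by simp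
  have b22h: "B$2$2 = (B$1$1 + B$3$3) / 2"
  proof -
    have "e * (2 * B$2$2) = e * (B$1$1 + B$3$3)" using b22 b1133 by (simp add: mult_ac)
    hence "2 * B$2$2 = B$1$1 + B$3$3" using e0 mult_cancel_left by blast
    thus ?thesis by (simp add: field_simps)
  qed
  define C :: "'k^2^2" where "C = vector [vector [B$1$1/2, B$2$3], vector [B$2$1, B$3$3/2]]"
  define psi :: "'k^2^2 \<Rightarrow> 'k^3" where "psi = (\<lambda>S. vector [S$1$1, S$1$2, S$2$2])"
  define dN :: "'k^2 \<Rightarrow> 'k^2" where "dN = (\<lambda>x. Dv D x + C *v x)"
  define \<phi> where "\<phi> = (\<lambda>S. P *v psi S)"
  have cN: "conn dN = C" using conn_N[OF der] dN_def by simp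
  have dQP0: "Dm D Q ** P + Q ** Dm D P = 0"
    using Dm_mult[OF der, of Q P] QP Dm_mat1[OF der] by metis
  have dQP: "Dm D Q ** P = - (Q ** Dm D P)" using dQP0 by (simp add: eq_neg_iff_add_eq_0)
  have PB: "P ** B = Dm D P + ?A ** P"
  proof -
    have "P ** B = (P ** Q) ** ?A ** P - P ** (Dm D Q ** P)"
      by (simp add: B_def mm_ldiff mm_rdiff matrix_mul_assoc)
    also have "\<dots> = ?A ** P + (P ** Q) ** Dm D P" using PQ by (simp add: dQP mm_lneg matrix_mul_assoc)
    also have "\<dots> = Dm D P + ?A ** P" using PQ by simp
    finally show ?thesis .
  qed
  have trB: "trace B = trace ?A - trace (Dm D Q ** P)"
  proof -
    have "trace B = trace ((Q ** ?A) ** P) - trace (Dm D Q ** P)" by (simp add: B_def mm_rdiff trace_sub)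
    also have "trace ((Q ** ?A) ** P) = trace ?A"
      using trace_mul_sym[of "Q ** ?A" P] PQ by (simp add: matrix_mul_assoc)
    finally show ?thesis .
  qed
  have adjP: "adj3 P = mat p ** Q"
  proof -
    have "adj3 P = adj3 P ** (P ** Q)" using PQ by simp
    also have "\<dots> = mat p ** Q" by (simp add: matrix_mul_assoc adj3_left p_def)
    finally show ?thesis .
  qed
  have trmat: "\<And>k X. trace (mat k ** (X::'k^3^3)) = k * trace X"
    by (simp add: trace_def matrix_matrix_mult_def mat_def sum_3 distrib_left)
  have jac: "D p = p * trace (Q ** Dm D P)"
    using jacobi3[OF der, of P] by (simp add: p_def[symmetric] adjP trmat matrix_mul_assoc[symmetric])
  have trneg: "\<And>X::'k^3^3. trace (- X) = - trace X" by (simp add: trace_def sum_3)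
  have trdQ: "trace (Dm D Q ** P) = - (D p / p)"
    using jac p0 by (simp add: dQP trneg)
  have trB3: "trace B = B$1$1 + B$2$2 + B$3$3" by (simp add: trace_def sum_3)
  have trC: "trace C = (B$1$1 + B$3$3) / 2" by (simp add: trace_def sum_2 C_def)
  define g where "g = f / (e * p)"
  have g0: "g \<noteq> 0" using f0 e0 p0 by (simp add: g_def)
  have Dg: "D g = (D f * (e * p) - f * (D e * p + e * D p)) / (e * p)^2"
  proof -
    have ep: "e * p \<noteq> 0" using e0 p0 by simp
    show ?thesis unfolding g_def d_divide[OF der ep] d_mult[OF der] by simp
  qed
  have trA: "trace ?A = (B$1$1 + B$2$2 + B$3$3) - D p / p" using trB trdQ trB3 by simp
  have Df0: "D f = - (f * trace ?A)" using hf by (simp add: eq_neg_iff_add_eq_0)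
  have Df: "D f = - f * ((B$1$1 + B$2$2 + B$3$3) - D p / p)" using Df0 trA by simp
  have eb: "e * B$2$2 = - D e / 2" using b22 by (simp add: field_simps)
  have num: "D f * (e * p) - f * (D e * p + e * D p) + f * (e * p) * ((B$1$1 + B$3$3) / 2) = 0"
  proof -
    have "D f * (e * p) = - f * p * (e * (B$1$1 + B$3$3)) - f * p * (e * B$2$2) + f * e * D p"
      using p0 by (simp add: Df field_simps)
    also have "\<dots> = - f * p * (- D e) - f * p * (- D e / 2) + f * e * D p"
      using b1133 b22 by (simp only: b1133 eb)
    also have "\<dots> = f * p * D e + f * p * D e / 2 + f * e * D p" by (simp add: field_simps)
    finally have X: "D f * (e * p) = f * p * D e + f * p * D e / 2 + f * e * D p" .
    have Y: "f * (e * p) * ((B$1$1 + B$3$3) / 2) = f * p * (e * (B$1$1 + B$3$3)) / 2" by (simp add: field_simps)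
    show ?thesis unfolding X Y b1133 by (simp add: field_simps)
  qed
  have gtriv: "D g + g * trace C = 0"
  proof -
    have "D g + g * trace C = (D f * (e * p) - f * (D e * p + e * D p) + f * (e * p) * ((B$1$1 + B$3$3) / 2)) / (e*p)^2"
      using e0 p0 unfolding Dg trC unfolding g_def by (simp add: field_simps power2_eq_square)
    thus ?thesis using num by simp
  qed
  have psi_add: "\<And>X Y. psi (X + Y) = psi X + psi Y" by (simp add: psi_def vec_eq_iff forall_3)
  have psi_scale: "\<And>c X. psi (mat_scale c X) = c *s psi X" by (simp add: psi_def vec_eq_iff forall_3 mat_scale_def)
  have psi_D: "\<And>X. psi (Dm D X) = Dv D (psi X)" by (simp add: psi_def vec_eq_iff forall_3 Dm_def Dv_def)
  have psi_act: "\<And>S. symm_tensor S \<Longrightarrow> psi (C ** S) + psi (S ** transpose C) = B *v psi S"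
  proof -
    fix S :: "'k^2^2" assume "symm_tensor S"
    hence s: "S$2$1 = S$1$2" by (simp add: symm_tensor_def)
    show "psi (C ** S) + psi (S ** transpose C) = B *v psi S"
      by (simp add: psi_def vec_eq_iff forall_3 C_def matrix_matrix_mult_def matrix_vector_mult_def
          transpose_def sum_2 sum_3 s b13 b31 b12 b32 b22h field_simps)
  qed
  have PQv: "\<And>v. P *v (Q *v v) = v" using PQ by (simp add: matrix_vector_mul_assoc)
  have QPv: "\<And>v. Q *v (P *v v) = v" using QP by (simp add: matrix_vector_mul_assoc)
  have inj: "inj_on \<phi> {S. symm_tensor S}"
  proof (rule inj_onI)
    fix S T assume S: "S \<in> {S. symm_tensor S}" and T: "T \<in> {S. symm_tensor S}" and eq: "\<phi> S = \<phi> T"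
    have ps: "psi S = psi T" using eq QPv unfolding \<phi>_def by metis
    have "psi S $ 1 = psi T $ 1" "psi S $ 2 = psi T $ 2" "psi S $ 3 = psi T $ 3" using ps by simp_all
    hence h: "S$1$1 = T$1$1" "S$1$2 = T$1$2" "S$2$2 = T$2$2" by (simp_all add: psi_def)
    have s2: "S$2$1 = S$1$2" "T$2$1 = T$1$2" using S T by (simp_all add: symm_tensor_def)
    show "S = T" by (simp add: vec_eq_iff forall_2 h s2)
  qed
  have surj: "\<phi> ` {S. symm_tensor S} = UNIV"
  proof (rule set_eqI, rule iffI)
    fix v :: "'k^3" assume "v \<in> UNIV"
    define y where "y = Q *v v"
    define S :: "'k^2^2" where "S = vector [vector [y$1, y$2], vector [y$2, y$3]]"
    have "symm_tensor S" by (simp add: S_def symm_tensor_def forall_2)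
    have yv: "(vector [y$1, y$2, y$3] :: 'k^3) = y" by (simp add: vec_eq_iff forall_3)
    have "\<phi> S = v" using PQv[of v] by (simp add: \<phi>_def S_def psi_def yv y_def[symmetric])
    with \<open>symm_tensor S\<close> show "v \<in> \<phi> ` {S. symm_tensor S}" by blast
  qed simp
  show ?thesis
  proof (intro exI conjI)
    show "diff_module D dN" unfolding dN_def by (rule diff_module_N[OF der])
    show "det_trivial D dN" unfolding det_trivial_def using g0 gtriv by (auto simp: wedge2 cN)
    show "sym2_iso D dN dM \<phi>"
      unfolding sym2_iso_def
    proof (intro conjI allI impI)
      fix S T :: "'k^2^2" show "\<phi> (S + T) = \<phi> S + \<phi> T" by (simp add: \<phi>_def psi_add matrix_vector_right_distrib)
    next
      fix c and S :: "'k^2^2" show "\<phi> (mat_scale c S) = c *s \<phi> S" by (simp add: \<phi>_def psi_scale vector_scalar_commute)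
    next
      show "bij_betw \<phi> {S. symm_tensor S} UNIV" using inj surj by (simp add: bij_betw_def)
    next
      fix S :: "'k^2^2" assume sS: "symm_tensor S"
      have "\<phi> (tensor2_deriv D dN S) = P *v (Dv D (psi S) + B *v psi S)"
        using psi_act[OF sS] by (simp add: \<phi>_def tensor_decomp cN psi_add psi_D add.assoc)
      also have "\<dots> = P *v Dv D (psi S) + (Dm D P + ?A ** P) *v psi S"
        by (simp add: matrix_vector_right_distrib matrix_vector_mul_assoc PB)
      also have "\<dots> = dM (\<phi> S)"
        by (simp add: dm \<phi>_def Dv_mat[OF der] matrix_vector_mult_add_rdistrib matrix_vector_mul_assoc algebra_simps)
      finally show "\<phi> (tensor2_deriv D dN S) = dM (\<phi> S)" .
    qed
  qed
qed

end
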